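(* Let $A,B,H,K$ be events with $H\ne\emptyset$, $K\ne\emptyset$. For each coherent prevision assessment $(x,y,w)$ on $\{A|H,B|K,(A|H)\vee(B|K)\}$ there exists $\lambda\in[0,+\infty]$ such that, as random quantities, $(A|H)\vee(B|K)=S_\lambda(A|H,B|K)$.
   Context: Events are identified with their indicators; $\bar E$ is the negation of $E$. For $H\ne\emptyset$ the conditional event $E|H$ is true if $EH$ is true, false if $\bar EH$ is true, void if $\bar H$ is true; with $P(E|H)=x$ it is identified with the random quantity $EH+x\bar H$, and a conditional random quantity $X|H$ with prevision $\mu$ with $XH+\mu\bar H$. Coherence (de Finetti): an assessment $(\mu_1,\dots,\mu_m)$ on $\{X_1|H_1,\dots,X_m|H_m\}$ is coherent iff for all real stakes $s_i$ the gain $G=\sum_is_iH_i(X_i-\mu_i)$, restricted to $H_1\vee\dots\vee H_m$, satisfies $\min G\le0\le\max G$. Disjunction of two conditional events: given $P(A|H)=x$, $P(B|K)=y$ and $w=\mathbb P[((AH\vee BK)+x\bar H\bar BK+y\bar K\bar AH)|(H\vee K)]$, the disjunction $(A|H)\vee(B|K)$ equals $1$ if $AH\vee BK$ is true, $0$ if $\bar AH\bar BK$ is true, $x$ if $\bar H\bar BK$ is true, $y$ if $\bar AH\bar K$ is true, $w$ if $\bar H\bar K$ is true; its prevision is $w$. Frank t-norms $T_\lambda$, $\lambda\in[0,+\infty]$: $T_0(x,y)=\min\{x,y\}$, $T_1(x,y)=xy$, $T_{+\infty}(x,y)=\max\{x+y-1,0\}$, $T_\lambda(x,y)=\log_\lambda\big(1+\frac{(\lambda^x-1)(\lambda^y-1)}{\lambda-1}\big)$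 otherwise. Frank t-conorms: $S_\lambda(x,y)=1-T_\lambda(1-x,1-y)$. $S_\lambda(A|H,B|K)$ is obtained by applying $S_\lambda$ pointwise to the values of $A|H$ and $B|K$. *)

theory Defs
  imports "HOL-Analysis.Analysis"
begin

definition ind :: "'w set \<Rightarrow> 'w \<Rightarrow> real" where
  "ind E \<omega> = (if \<omega> \<in> E then 1 else 0)"

text \<open>Conditional event E|H with P(E|H)=x as the random quantity EH + x(not H).\<close>
definition cond_event :: "'w set \<Rightarrow> 'w set \<Rightarrow> real \<Rightarrow> 'w \<Rightarrow> real" where
  "cond_event E H x = (\<lambda>\<omega>. ind (E \<inter> H) \<omega> + x * ind (- H) \<omega>)"

text \<open>Coherence (de Finetti) of an assessment on a finite family of conditional
random quantities X_i|H_i with previsions mu_i, given as a list of triples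
(X_i, H_i, mu_i).\<close>
definition coherent :: "(('w \<Rightarrow> real) \<times> 'w set \<times> real) list \<Rightarrow> bool" where
  "coherent L \<longleftrightarrow>
     (\<forall>s :: nat \<Rightarrow> real.
        let G = (\<lambda>\<omega>. \<Sum>i<length L. s i * ind (fst (snd (L ! i))) \<omega>
                          * (fst (L ! i) \<omega> - snd (snd (L ! i))));
            U = (\<Union>i<length L. fst (snd (L ! i)))
        in (\<exists>\<omega>\<in>U. G \<omega> \<le> 0) \<and> (\<exists>\<omega>\<in>U. 0 \<le> G \<omega>))"

text \<open>The random quantity (AH or BK) + x (not H)(not B)K + y (not K)(not A)H,
whose conditional prevision given H or K is w.\<close>
definition disj_num :: "'w set \<Rightarrow> 'w set \<Rightarrow> 'w set \<Rightarrow> 'w set \<Rightarrow> real \<Rightarrow> real \<Rightarrow> 'w \<Rightarrow> real" where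
  "disj_num A H B K x y = (\<lambda>\<omega>. ind ((A \<inter> H) \<union> (B \<inter> K)) \<omega>
      + x * ind (- H \<inter> - B \<inter> K) \<omega> + y * ind (- K \<inter> - A \<inter> H) \<omega>)"

text \<open>The disjunction (A|H) or (B|K), with P(A|H)=x, P(B|K)=y and prevision w.\<close>
definition cond_disj :: "'w set \<Rightarrow> 'w set \<Rightarrow> 'w set \<Rightarrow> 'w set \<Rightarrow> real \<Rightarrow> real \<Rightarrow> real \<Rightarrow> 'w \<Rightarrow> real" where
  "cond_disj A H B K x y w = (\<lambda>\<omega>.
     if \<omega> \<in> (A \<inter> H) \<union> (B \<inter> K) then 1
     else if \<omega> \<in> (- A \<inter> H) \<inter> (- B \<inter> K) then 0
     else if \<omega> \<in> - H \<inter> (- B \<inter> K) then x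
     else if \<omega> \<in> (- A \<inter> H) \<inter> - K then y
     else w)"

definition frank_T :: "ereal \<Rightarrow> real \<Rightarrow> real \<Rightarrow> real" where
  "frank_T l a b =
     (if l = 0 then min a b
      else if l = 1 then a * b
      else if l = \<infinity> then max (a + b - 1) 0
      else (let r = real_of_ereal l in
            log r (1 + (r powr a - 1) * (r powr b - 1) / (r - 1))))"

definition frank_S :: "ereal \<Rightarrow> real \<Rightarrow> real \<Rightarrow> real" where
  "frank_S l a b = 1 - frank_T l (1 - a) (1 - b)"

end

theory Submission
  imports Defs
begin




lemma bern: fixes t q :: real assumes "0 < t" "0 \<le> q" "q \<le> 1"
  shows "t powr q \<le> 1 + q * (t - 1)"
proof -
  have "exp ((1 - q) *\<^sub>R 0 + q *\<^sub>R ln t) \<le> (1 - q) * exp 0 + q * exp (ln t)"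
    using convex_onD[OF exp_convex, of q 0 "ln t"] assms by auto
  thus ?thesis using assms by (simp add: powr_def algebra_simps)
qed

lemma bern2: fixes r p :: real assumes "0 < r" "0 \<le> p" "p \<le> 1"
  shows "1 - r powr p \<le> p * r powr (p - 1) * (1 - r)"
proof -
  have "r powr (1 - p) \<le> 1 + (1 - p) * (r - 1)" using bern[of r "1-p"] assms by auto
  hence "r powr (p - 1) * r powr (1 - p) \<le> r powr (p - 1) * (1 + (1 - p) * (r - 1))"
    by (intro mult_left_mono) auto
  moreover have "r powr (p - 1) * r powr (1 - p) = 1"
  proof -
    have "r powr (p - 1) * r powr (1 - p) = r powr ((p - 1) + (1 - p))" by (rule powr_add[symmetric])
    also have "\<dots> = 1" using assms by simp
    finally show ?thesis .
  qed
  moreover have "r powr (p - 1) * r = r powr p"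
  proof -
    have "r powr (p - 1) * r powr 1 = r powr ((p - 1) + 1)" by (rule powr_add[symmetric])
    moreover have "r powr 1 = r" using assms by simp
    ultimately show ?thesis by simp
  qed
  ultimately show ?thesis by (simp add: algebra_simps)
qed

definition hf :: "real \<Rightarrow> real \<Rightarrow> real \<Rightarrow> real \<Rightarrow> real" where
  "hf a b c r = (1 - r powr a) * (1 - r powr b) - (1 - r) * (1 - r powr c)"

lemma frank_T_r: assumes "0 < r" "r \<noteq> 1" shows
   "frank_T (ereal r) a b = log r (1 + (r powr a - 1) * (r powr b - 1) / (r - 1))"
proof -
  have h: "(ereal r = 0) = False" "(ereal r = 1) = False" "(ereal r = \<infinity>) = False" using assms by auto
  show ?thesis unfolding frank_T_def Let_def h if_False real_of_ereal.simps by (rule refl)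
qed
lemma hf_zero: assumes "0 < r" "r \<noteq> 1" "hf a b c r = 0"
  shows "frank_T (ereal r) a b = c"
proof -
  have "(r powr a - 1) * (r powr b - 1) = (r - 1) * (r powr c - 1)"
    using assms(3) unfolding hf_def by (simp add: algebra_simps)
  hence "(r powr a - 1) * (r powr b - 1) / (r - 1) = r powr c - 1" using assms(2) by simp
  thus ?thesis using assms by (simp add: frank_T_r)
qed

lemma hf_cont: "0 < u \<Longrightarrow> continuous_on {u..v} (hf a b c)"
  unfolding hf_def by (intro continuous_intros) auto

lemma ivt_hf: assumes "0 < r1" "0 < r2" "hf a b c r1 > 0" "hf a b c r2 < 0"
  shows "\<exists>r. min r1 r2 \<le> r \<and> r \<le> max r1 r2 \<and> hf a b c r = 0"
proof (cases "r1 \<le> r2")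
  case True
  then obtain r where "r1 \<le> r" "r \<le> r2" "hf a b c r = 0"
    using IVT2'[of "hf a b c" r2 0 r1] hf_cont[of r1] assms by force
  thus ?thesis using True by auto
next
  case False
  then obtain r where "r2 \<le> r" "r \<le> r1" "hf a b c r = 0"
    using IVT'[of "hf a b c" r2 0 r1] hf_cont[of r2] assms by force
  thus ?thesis using False by auto
qed

lemma L1: assumes "0 < a" "a < 1" "0 < b" "b < 1" "a * b < c" "c < min a b"
  shows "\<exists>r. 0 < r \<and> r < 1 \<and> hf a b c r = 0"
proof -
  have c0: "0 < c" using assms by (smt (verit) mult_pos_pos)
  define d where "d = min a b - c"
  have d0: "0 < d" using assms d_def by auto
  define r1 where "r1 = (1/4) powr (1/d)"
  have r10: "0 < r1" "r1 < 1" unfolding r1_def using d0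
    using powr_less_mono2[of "1/d" "1/4" 1] by auto
  have r1d: "r1 powr d = 1/4" unfolding r1_def using d0 by (simp add: powr_powr)
  have pa: "r1 powr a \<le> r1 powr c / 4"
  proof -
    have "r1 powr (a - c) \<le> r1 powr d" using powr_mono'[of d "a - c" r1] r10 d_def by auto
    moreover have "r1 powr a = r1 powr c * r1 powr (a - c)" by (simp add: powr_add[symmetric])
    ultimately show ?thesis using r1d r10 by (simp add: mult_left_mono)
  qed
  have pb: "r1 powr b \<le> r1 powr c / 4"
  proof -
    have "r1 powr (b - c) \<le> r1 powr d" using powr_mono'[of d "b - c" r1] r10 d_def by auto
    moreover have "r1 powr b = r1 powr c * r1 powr (b - c)" by (simp add: powr_add[symmetric])
    ultimately show ?thesis using r1d r10 by (simp add: mult_left_mono)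
  qed
  have h1: "hf a b c r1 > 0"
  proof -
    have "r1 powr c \<le> 1" using powr_mono'[of 0 c r1] r10 c0 by auto
    hence "(1 - r1) * (1 - r1 powr c) \<le> 1 - r1 powr c" using r10
      by (simp add: mult_left_le_one_le)
    moreover have "(1 - r1 powr a) * (1 - r1 powr b) \<ge> 1 - r1 powr a - r1 powr b"
      by (simp add: algebra_simps)
    moreover have "r1 powr c > 0" using r10 by simp
    ultimately show ?thesis unfolding hf_def using pa pb by linarith
  qed
  define e where "e = 2 - a - b"
  have e0: "e > 0" using assms e_def by auto
  define q where "q = (1 + a * b / c) / 2"
  have abc: "a * b / c < 1" using assms c0 by (simp add: field_simps)
  have ab0: "0 < a * b / c" using assms c0 by simp
  define t where "t = a * b / c"
  have q0: "0 < q" "q < 1" "a * b / c < q" unfolding q_def using abc ab0 unfolding t_def[symmetric] by auto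
  define r2 where "r2 = q powr (1/e)"
  have r20: "0 < r2" "r2 < 1" unfolding r2_def using q0 e0
    using powr_less_mono2[of "1/e" q 1] by auto
  have r2e: "r2 powr (a + b - 2) = 1 / q"
  proof -
    have ee: "(1/e) * (a + b - 2) = -1" using e0 e_def by (simp add: field_simps)
    have "r2 powr (a + b - 2) = q powr ((1/e) * (a + b - 2))" by (simp add: r2_def powr_powr)
    also have "\<dots> = q powr (-1)" using ee by simp
    also have "\<dots> = 1 / q" using q0 by (simp add: powr_minus_divide)
    finally show ?thesis .
  qed
  have h2: "hf a b c r2 < 0"
  proof -
    have ba: "1 - r2 powr a \<le> a * r2 powr (a - 1) * (1 - r2)" using bern2[of r2 a] r20 assms by auto
    have bb: "1 - r2 powr b \<le> b * r2 powr (b - 1) * (1 - r2)" using bern2[of r2 b] r20 assms by auto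
    have na: "0 \<le> 1 - r2 powr a" using powr_mono'[of 0 a r2] r20 assms by auto
    have nb: "0 \<le> 1 - r2 powr b" using powr_mono'[of 0 b r2] r20 assms by auto
    have "(1 - r2 powr a) * (1 - r2 powr b) \<le> (a * r2 powr (a - 1) * (1 - r2)) * (b * r2 powr (b - 1) * (1 - r2))"
      using ba bb na nb by (intro mult_mono) auto
    also have "\<dots> = a * b * r2 powr (a + b - 2) * (1 - r2)^2"
    proof -
      have "r2 powr (a + b - 2) = r2 powr (a - 1) * r2 powr (b - 1)"
        by (simp add: powr_add[symmetric])
      thus ?thesis by (simp add: power2_eq_square)
    qed
    also have "\<dots> = a * b / q * (1 - r2)^2" using r2e by simp
    also have "\<dots> < c * (1 - r2)^2"
    proof -
      have "a * b / q < c" using q0 c0 by (simp add: field_simps)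
      thus ?thesis using r20 by (intro mult_strict_right_mono) auto
    qed
    also have "\<dots> \<le> (1 - r2) * (1 - r2 powr c)"
    proof -
      have "r2 powr c \<le> 1 + c * (r2 - 1)" using bern[of r2 c] r20 c0 assms by auto
      hence "c * (1 - r2) \<le> 1 - r2 powr c" by (simp add: algebra_simps)
      hence "(1 - r2) * (c * (1 - r2)) \<le> (1 - r2) * (1 - r2 powr c)" using r20
        by (intro mult_left_mono) auto
      thus ?thesis by (simp add: power2_eq_square algebra_simps)
    qed
    finally show ?thesis unfolding hf_def by simp
  qed
  from ivt_hf[OF r10(1) r20(1) h1 h2] obtain r where
    "min r1 r2 \<le> r" "r \<le> max r1 r2" "hf a b c r = 0" by blast
  thus ?thesis using r10 r20 by (intro exI[of _ r]) auto
qed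


lemma L2: assumes "0 < a" "a < 1" "0 < b" "b < 1" "max (a + b - 1) 0 < c" "c < a * b"
  shows "\<exists>r. 1 < r \<and> hf a b c r = 0"
proof -
  have c0: "0 < c" using assms by linarith
  have c1: "c < 1" using assms mult_strict_mono[of a 1 b 1] by auto
  define e where "e = 2 - a - b"
  have e0: "e > 0" using assms e_def by auto
  define q where "q = (1 + a * b / c) / 2"
  have abc: "1 < a * b / c" using assms c0 by (simp add: field_simps)
  define t where "t = a * b / c"
  have q0: "1 < q" "q < a * b / c" unfolding q_def using abc unfolding t_def[symmetric] by auto
  define r1 where "r1 = q powr (1/e)"
  have r10: "1 < r1" unfolding r1_def using q0 e0 by simp
  have r1e: "r1 powr (a + b - 2) = 1 / q"
  proof -
    have ee: "(1/e) * (a + b - 2) = -1" using e0 e_def by (simp add: field_simps)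
    have "r1 powr (a + b - 2) = q powr ((1/e) * (a + b - 2))" by (simp add: r1_def powr_powr)
    also have "\<dots> = q powr (-1)" using ee by simp
    also have "\<dots> = 1 / q" using q0 by (simp add: powr_minus_divide)
    finally show ?thesis .
  qed
  have h1: "hf a b c r1 > 0"
  proof -
    have ba: "r1 powr a - 1 \<ge> a * r1 powr (a - 1) * (r1 - 1)" using bern2[of r1 a] r10 assms
      by (auto simp: algebra_simps)
    have bb: "r1 powr b - 1 \<ge> b * r1 powr (b - 1) * (r1 - 1)" using bern2[of r1 b] r10 assms
      by (auto simp: algebra_simps)
    have na: "0 \<le> a * r1 powr (a - 1) * (r1 - 1)" using r10 assms by auto
    have nb: "0 \<le> b * r1 powr (b - 1) * (r1 - 1)" using r10 assms by auto
    have "(1 - r1) * (1 - r1 powr c) = (r1 - 1) * (r1 powr c - 1)" by (simp add: algebra_simps)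
    also have "\<dots> \<le> (r1 - 1) * (c * (r1 - 1))"
    proof -
      have "r1 powr c \<le> 1 + c * (r1 - 1)" using bern[of r1 c] r10 c0 c1 by auto
      thus ?thesis using r10 by (intro mult_left_mono) auto
    qed
    also have "\<dots> = c * (r1 - 1)^2" by (simp add: power2_eq_square)
    also have "\<dots> < a * b / q * (r1 - 1)^2"
    proof -
      have "c < a * b / q" using q0 c0 by (simp add: field_simps)
      thus ?thesis using r10 by (intro mult_strict_right_mono) auto
    qed
    also have "\<dots> = a * b * r1 powr (a + b - 2) * (r1 - 1)^2" using r1e by simp
    also have "\<dots> = (a * r1 powr (a - 1) * (r1 - 1)) * (b * r1 powr (b - 1) * (r1 - 1))"
    proof -
      have "r1 powr (a + b - 2) = r1 powr (a - 1) * r1 powr (b - 1)"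
        by (simp add: powr_add[symmetric])
      thus ?thesis by (simp add: power2_eq_square)
    qed
    also have "\<dots> \<le> (r1 powr a - 1) * (r1 powr b - 1)"
      using ba bb na nb by (intro mult_mono) auto
    also have "\<dots> = (1 - r1 powr a) * (1 - r1 powr b)" by (simp add: algebra_simps)
    finally show ?thesis unfolding hf_def by simp
  qed
  define d where "d = min (min (c + 1 - a - b) c) 1"
  have d0: "0 < d" using assms c0 d_def by auto
  define r2 where "r2 = 3 powr (1/d)"
  have r20: "1 < r2" unfolding r2_def using d0 by simp
  have r2d: "r2 powr (- d) = 1/3" unfolding r2_def using d0
    by (simp add: powr_powr powr_minus_divide)
  have t1: "r2 powr (a + b) \<le> r2 powr (c + 1) / 3"
  proof -
    have "r2 powr (a + b - (c + 1)) \<le> r2 powr (- d)" using r20 d_def by (intro powr_mono) auto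
    moreover have "r2 powr (a + b) = r2 powr (c + 1) * r2 powr (a + b - (c + 1))"
      by (simp add: powr_add[symmetric])
    ultimately show ?thesis using r2d r20 by (simp add: mult_left_mono)
  qed
  have t2: "r2 \<le> r2 powr (c + 1) / 3"
  proof -
    have cd: "-c \<le> -d" unfolding d_def by simp
    have "r2 powr (-c) \<le> r2 powr (-d)" by (rule powr_mono[OF cd]) (use r20 in simp)
    hence m: "r2 powr (-c) \<le> 1/3" unfolding r2d .
    have "r2 = r2 powr (c + 1) * r2 powr (-c)" using r20 by (simp add: powr_add[symmetric])
    also have "\<dots> \<le> r2 powr (c + 1) * (1/3)" using m by (intro mult_left_mono) auto
    finally show ?thesis by simp
  qed
  have t3: "r2 powr c \<le> r2 powr (c + 1) / 3"
  proof -
    have d1: "d \<le> 1" unfolding d_def by simp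
    have "1 \<le> 1/d" using d0 d1 by (simp add: field_simps)
    hence "3 powr 1 \<le> 3 powr (1/d)" by (intro powr_mono) auto
    hence r3: "3 \<le> r2" unfolding r2_def by simp
    have e: "r2 powr (c + 1) = r2 powr c * r2" using r20 by (simp add: powr_add)
    have "r2 powr c * 3 \<le> r2 powr c * r2" using r3 by (intro mult_left_mono) auto
    thus ?thesis using e by simp
  qed
  have h2: "hf a b c r2 < 0"
  proof -
    have ga: "r2 powr a > 1" "r2 powr b > 1" using r20 assms by auto
    have e1: "(1 - r2 powr a) * (1 - r2 powr b) = r2 powr (a + b) - r2 powr a - r2 powr b + 1"
      by (simp add: algebra_simps powr_add)
    have e2: "(1 - r2) * (1 - r2 powr c) = r2 powr (c + 1) - r2 - r2 powr c + 1"
      using r20 by (simp add: algebra_simps powr_add)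
    show ?thesis unfolding hf_def e1 e2 using t1 t2 t3 ga by linarith
  qed
  from ivt_hf[OF _ _ h1 h2] r10 r20 obtain r where
    "min r1 r2 \<le> r" "r \<le> max r1 r2" "hf a b c r = 0" by auto
  thus ?thesis using r10 r20 by (intro exI[of _ r]) auto
qed


lemma ereal_pos_cases: assumes "0 \<le> l" "l \<noteq> 0" "l \<noteq> 1" "l \<noteq> \<infinity>"
  obtains r where "l = ereal r" "0 < r" "r \<noteq> 1"
proof -
  obtain r where r: "l = ereal r" using assms by (cases l) auto
  thus ?thesis using assms that by auto
qed

lemma T_bound: assumes "0 \<le> l" "0 \<le> t" "t \<le> 1"
  shows "frank_T l t 0 = 0 \<and> frank_T l 0 t = 0 \<and> frank_T l t 1 = t \<and> frank_T l 1 t = t"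
proof -
  consider "l = 0" | "l = 1" | "l = \<infinity>" | "l \<noteq> 0 \<and> l \<noteq> 1 \<and> l \<noteq> \<infinity>" by blast
  thus ?thesis
  proof cases
    case 4
    then obtain r where r: "l = ereal r" "0 < r" "r \<noteq> 1" using ereal_pos_cases assms(1) by metis
    have "r - 1 \<noteq> 0" using r by simp
    thus ?thesis using r by (simp add: frank_T_r)
  qed (use assms in \<open>auto simp: frank_T_def\<close>)
qed

lemma S_bound: assumes "0 \<le> l" "0 \<le> t" "t \<le> 1"
  shows "frank_S l t 1 = 1" "frank_S l 1 t = 1" "frank_S l t 0 = t" "frank_S l 0 t = t"
  using T_bound[OF assms(1), of "1 - t"] assms by (auto simp: frank_S_def)

lemma S_one: "frank_S 1 a b = a + b - a * b"
  by (simp add: frank_S_def frank_T_def algebra_simps)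

lemma pointwise:
  assumes "S 1 0 = 1" "S 1 1 = 1" "S 1 y = 1" "S 0 1 = 1" "S x 1 = 1"
    "S 0 0 = 0" "S x 0 = x" "S 0 y = y" "S x y = w"
  shows "cond_disj A H B K x y w \<omega> = S (cond_event A H x \<omega>) (cond_event B K y \<omega>)"
  using assms by (auto simp: cond_disj_def cond_event_def ind_def)

lemma T_exists: assumes "0 \<le> a" "a \<le> 1" "0 \<le> b" "b \<le> 1" "max (a + b - 1) 0 \<le> c" "c \<le> min a b"
  shows "\<exists>l\<ge>0. frank_T l a b = c"
proof -
  consider "c = a * b" | "a * b < c" | "c < a * b" by linarith
  thus ?thesis
  proof cases
    case 1 thus ?thesis by (intro exI[of _ 1]) (simp add: frank_T_def)
  next
    case 2
    show ?thesis
    proof (cases "c = min a b")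
      case True thus ?thesis by (intro exI[of _ 0]) (simp add: frank_T_def)
    next
      case False
      hence lt: "c < min a b" using assms by (cases "a \<le> b") (auto simp: min_def)
      have "0 < a"
      proof (rule ccontr)
        assume "\<not> 0 < a" hence "a = 0" using assms by simp
        thus False using 2 lt assms by (auto simp: min_def)
      qed
      moreover have "a < 1"
      proof (rule ccontr)
        assume "\<not> a < 1" hence "a = 1" using assms by simp
        thus False using 2 lt assms by (auto simp: min_def)
      qed
      moreover have "0 < b"
      proof (rule ccontr)
        assume "\<not> 0 < b" hence "b = 0" using assms by simp
        thus False using 2 lt assms by (auto simp: min_def)
      qed
      moreover have "b < 1"
      proof (rule ccontr)
        assume "\<not> b < 1" hence "b = 1" using assms by simp
        thus False using 2 lt assms by (auto simp: min_def)
      qed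
      ultimately obtain r where r: "0 < r" "r < 1" "hf a b c r = 0" using L1 2 lt by blast
      hence "frank_T (ereal r) a b = c" by (intro hf_zero) auto
      thus ?thesis using r by (intro exI[of _ "ereal r"]) auto
    qed
  next
    case 3
    show ?thesis
    proof (cases "c = max (a + b - 1) 0")
      case True thus ?thesis by (intro exI[of _ \<infinity>]) (simp add: frank_T_def)
    next
      case False
      hence lt: "max (a + b - 1) 0 < c" using assms by (cases "a + b - 1 \<le> 0") (auto simp: max_def)
      have "0 < a"
      proof (rule ccontr)
        assume "\<not> 0 < a" hence "a = 0" using assms by simp
        thus False using 3 lt assms by (auto simp: max_def split: if_splits)
      qed
      moreover have "a < 1"
      proof (rule ccontr)
        assume "\<not> a < 1" hence "a = 1" using assms by simp
        thus False using 3 lt assms by (auto simp: max_def split: if_splits)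
      qed
      moreover have "0 < b"
      proof (rule ccontr)
        assume "\<not> 0 < b" hence "b = 0" using assms by simp
        thus False using 3 lt assms by (auto simp: max_def split: if_splits)
      qed
      moreover have "b < 1"
      proof (rule ccontr)
        assume "\<not> b < 1" hence "b = 1" using assms by simp
        thus False using 3 lt assms by (auto simp: max_def split: if_splits)
      qed
      ultimately obtain r where r: "1 < r" "hf a b c r = 0" using L2 3 lt by blast
      hence "frank_T (ereal r) a b = c" by (intro hf_zero) auto
      thus ?thesis using r by (intro exI[of _ "ereal r"]) auto
    qed
  qed
qed

lemma lin3: "(\<Sum>i\<in>I. u i * (\<alpha> + \<beta> * f i + \<gamma> * g i + \<delta> * k i)) =
   \<alpha> * sum u I + \<beta> * (\<Sum>i\<in>I. u i * f i) + \<gamma> * (\<Sum>i\<in>I. u i * g i) + \<delta> * (\<Sum>i\<in>I. u i * k i)"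
  for u f g k :: "nat \<Rightarrow> real"
  by (simp add: sum.distrib sum_distrib_left algebra_simps)

lemma dualC:
  fixes u :: "nat \<Rightarrow> real" and \<omega> :: "nat \<Rightarrow> 'w"
  assumes I: "finite I" and pos: "\<forall>i\<in>I. 0 \<le> u i \<and> \<omega> i \<in> H \<union> K" and s1: "sum u I = 1"
    and E1: "(\<Sum>i\<in>I. u i * (ind H (\<omega> i) * (ind A (\<omega> i) - x))) = 0"
    and E2: "(\<Sum>i\<in>I. u i * (ind K (\<omega> i) * (ind B (\<omega> i) - y))) = 0"
    and E3: "(\<Sum>i\<in>I. u i * (disj_num A H B K x y (\<omega> i) - w)) = 0"
  shows "w = x + y - x * y \<or> (0 \<le> x \<and> x \<le> 1 \<and> 0 \<le> y \<and> y \<le> 1 \<and> x \<le> w \<and> y \<le> w \<and> w \<le> x + y \<and> w \<le> 1)"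
proof -
  define D where "D i = disj_num A H B K x y (\<omega> i)" for i
  define G1 where "G1 i = ind H (\<omega> i) * (ind A (\<omega> i) - x)" for i
  define G2 where "G2 i = ind K (\<omega> i) * (ind B (\<omega> i) - y)" for i
  have Dw: "(\<Sum>i\<in>I. u i * D i) = w"
    using lin3[of u "-w" 1 D 0 D 0 D I] E3 s1 unfolding D_def by simp
  have E1': "(\<Sum>i\<in>I. u i * G1 i) = 0" using E1 unfolding G1_def .
  have E2': "(\<Sum>i\<in>I. u i * G2 i) = 0" using E2 unfolding G2_def .
  have key: "(\<Sum>i\<in>I. u i * F i) \<ge> 0" if "\<forall>i\<in>I. F i \<ge> 0" for F
    using that pos by (intro sum_nonneg) auto
  define pH where "pH = (\<Sum>i\<in>I. u i * ind H (\<omega> i))"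
  define pK where "pK = (\<Sum>i\<in>I. u i * ind K (\<omega> i))"
  have pH0: "pH \<ge> 0" unfolding pH_def using pos by (intro sum_nonneg) (auto simp: ind_def)
  have pK0: "pK \<ge> 0" unfolding pK_def using pos by (intro sum_nonneg) (auto simp: ind_def)
  show ?thesis
  proof (cases "pH = 0")
    case True
    have nn: "\<And>i. i \<in> I \<Longrightarrow> 0 \<le> u i * ind H (\<omega> i)" using pos by (auto simp: ind_def)
    have z: "\<forall>i\<in>I. u i * ind H (\<omega> i) = 0"
      using sum_nonneg_eq_0_iff[OF I, of "\<lambda>i. u i * ind H (\<omega> i)"] nn True unfolding pH_def by blast
    have p1: "u i * G2 i = u i * (-y + 1 * ind B (\<omega> i))" if "i \<in> I" for i
      using z[rule_format, OF that] pos[rule_format, OF that] unfolding G2_def by (cases "u i = 0") (auto simp: ind_def)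
    have p2: "u i * D i = u i * (x + (1 - x) * ind B (\<omega> i))" if "i \<in> I" for i
      using z[rule_format, OF that] pos[rule_format, OF that] unfolding D_def by (cases "u i = 0") (auto simp: ind_def disj_num_def)
    have "(\<Sum>i\<in>I. u i * (-y + 1 * ind B (\<omega> i))) = 0" using E2' p1 by (metis (no_types, lifting) sum.cong)
    hence b: "(\<Sum>i\<in>I. u i * ind B (\<omega> i)) = y"
      using lin3[of u "-y" 1 "\<lambda>i. ind B (\<omega> i)" 0 D 0 D I] s1 by simp
    have "(\<Sum>i\<in>I. u i * (x + (1 - x) * ind B (\<omega> i))) = w" using Dw p2 by (metis (no_types, lifting) sum.cong)
    hence "x + (1 - x) * y = w"
      using lin3[of u x "1 - x" "\<lambda>i. ind B (\<omega> i)" 0 D 0 D I] s1 b by simp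
    thus ?thesis by (simp add: algebra_simps)
  next
    case hne: False
    show ?thesis
    proof (cases "pK = 0")
      case True
      have nn: "\<And>i. i \<in> I \<Longrightarrow> 0 \<le> u i * ind K (\<omega> i)" using pos by (auto simp: ind_def)
      have z: "\<forall>i\<in>I. u i * ind K (\<omega> i) = 0"
        using sum_nonneg_eq_0_iff[OF I, of "\<lambda>i. u i * ind K (\<omega> i)"] nn True unfolding pK_def by blast
      have p1: "u i * G1 i = u i * (-x + 1 * ind A (\<omega> i))" if "i \<in> I" for i
        using z[rule_format, OF that] pos[rule_format, OF that] unfolding G1_def by (cases "u i = 0") (auto simp: ind_def)
      have p2: "u i * D i = u i * (y + (1 - y) * ind A (\<omega> i))" if "i \<in> I" for i
        using z[rule_format, OF that] pos[rule_format, OF that] unfolding D_def by (cases "u i = 0") (auto simp: ind_def disj_num_def)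
      have "(\<Sum>i\<in>I. u i * (-x + 1 * ind A (\<omega> i))) = 0" using E1' p1 by (metis (no_types, lifting) sum.cong)
      hence b: "(\<Sum>i\<in>I. u i * ind A (\<omega> i)) = x"
        using lin3[of u "-x" 1 "\<lambda>i. ind A (\<omega> i)" 0 D 0 D I] s1 by simp
      have "(\<Sum>i\<in>I. u i * (y + (1 - y) * ind A (\<omega> i))) = w" using Dw p2 by (metis (no_types, lifting) sum.cong)
      hence "y + (1 - y) * x = w"
        using lin3[of u y "1 - y" "\<lambda>i. ind A (\<omega> i)" 0 D 0 D I] s1 b by simp
      thus ?thesis by (simp add: algebra_simps)
    next
      case kne: False
      have pHp: "pH > 0" using hne pH0 by simp
      have pKp: "pK > 0" using kne pK0 by simp
      define qA where "qA = (\<Sum>i\<in>I. u i * ind (A \<inter> H) (\<omega> i))"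
      define qB where "qB = (\<Sum>i\<in>I. u i * ind (B \<inter> K) (\<omega> i))"
      have "(\<Sum>i\<in>I. u i * G1 i) = (\<Sum>i\<in>I. u i * (0 + (-x) * ind H (\<omega> i) + 1 * ind (A \<inter> H) (\<omega> i) + 0 * D i))"
        unfolding G1_def by (intro sum.cong) (auto simp: ind_def)
      hence qAx: "qA = x * pH" using E1' lin3[of u 0 "-x" "\<lambda>i. ind H (\<omega> i)" 1 "\<lambda>i. ind (A \<inter> H) (\<omega> i)" 0 D I]
        unfolding qA_def pH_def by simp
      have "(\<Sum>i\<in>I. u i * G2 i) = (\<Sum>i\<in>I. u i * (0 + (-y) * ind K (\<omega> i) + 1 * ind (B \<inter> K) (\<omega> i) + 0 * D i))"
        unfolding G2_def by (intro sum.cong) (auto simp: ind_def)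
      hence qBy: "qB = y * pK" using E2' lin3[of u 0 "-y" "\<lambda>i. ind K (\<omega> i)" 1 "\<lambda>i. ind (B \<inter> K) (\<omega> i)" 0 D I]
        unfolding qB_def pK_def by simp
      have qA0: "qA \<ge> 0" unfolding qA_def using pos by (intro sum_nonneg) (auto simp: ind_def)
      have qB0: "qB \<ge> 0" unfolding qB_def using pos by (intro sum_nonneg) (auto simp: ind_def)
      have qA1: "qA \<le> pH" unfolding qA_def pH_def using pos by (intro sum_mono) (auto simp: ind_def)
      have qB1: "qB \<le> pK" unfolding qB_def pK_def using pos by (intro sum_mono) (auto simp: ind_def)
      have x01: "0 \<le> x" "x \<le> 1" using qAx qA0 qA1 pHp
        by (simp_all add: zero_le_mult_iff mult_le_cancel_right1 mult_le_cancel_right2)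
      have y01: "0 \<le> y" "y \<le> 1" using qBy qB0 qB1 pKp
        by (simp_all add: zero_le_mult_iff mult_le_cancel_right1 mult_le_cancel_right2)
      have i1: "(\<Sum>i\<in>I. u i * (-x + 1 * D i + (-1) * G1 i + 0 * G2 i)) \<ge> 0"
        using x01 y01 pos by (intro key) (auto simp: D_def G1_def ind_def disj_num_def)
      have i2: "(\<Sum>i\<in>I. u i * (-y + 1 * D i + 0 * G1 i + (-1) * G2 i)) \<ge> 0"
        using x01 y01 pos by (intro key) (auto simp: D_def G2_def ind_def disj_num_def)
      have i3: "(\<Sum>i\<in>I. u i * ((x + y) + (-1) * D i + 1 * G1 i + 1 * G2 i)) \<ge> 0"
        using x01 y01 pos by (intro key) (auto simp: D_def G1_def G2_def ind_def disj_num_def)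
      have i4: "(\<Sum>i\<in>I. u i * (1 + (-1) * D i + 0 * G1 i + 0 * G2 i)) \<ge> 0"
        using x01 y01 pos by (intro key) (auto simp: D_def ind_def disj_num_def)
      note l = lin3[of u _ _ D _ G1 _ G2 I]
      have "x \<le> w" using i1 l[of "-x" 1 "-1" 0] s1 Dw E1' E2' by simp
      moreover have "y \<le> w" using i2 l[of "-y" 1 0 "-1"] s1 Dw E1' E2' by simp
      moreover have "w \<le> x + y" using i3 l[of "x + y" "-1" 1 1] s1 Dw E1' E2' by simp
      moreover have "w \<le> 1" using i4 l[of 1 "-1" 0 0] s1 Dw E1' E2' by simp
      ultimately show ?thesis using x01 y01 by blast
    qed
  qed
qed



lemma coh3:
  assumes "coherent [(ind A, H, x), (ind B, K, y), (disj_num A H B K x y, H \<union> K, w)]"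
  shows "\<exists>\<omega>\<in>H \<union> K. s0 * ind H \<omega> * (ind A \<omega> - x) + s1 * ind K \<omega> * (ind B \<omega> - y)
            + s2 * ind (H \<union> K) \<omega> * (disj_num A H B K x y \<omega> - w) \<le> 0"
proof -
  define L where "L = [(ind A, H, x), (ind B, K, y), (disj_num A H B K x y, H \<union> K, w)]"
  define s where "s i = (if i = 0 then s0 else if i = 1 then s1 else s2)" for i :: nat
  have e: "{..<3::nat} = {0,1,2}" by auto
  have len: "length L = 3" by (simp add: L_def)
  from assms have c: "coherent L" by (simp add: L_def)
  have "\<exists>\<omega>\<in>(\<Union>i<length L. fst (snd (L ! i))).
      (\<Sum>i<length L. s i * ind (fst (snd (L ! i))) \<omega> * (fst (L ! i) \<omega> - snd (snd (L ! i)))) \<le> 0"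
    using c unfolding coherent_def Let_def by blast
  hence "\<exists>\<omega>\<in>(\<Union>i\<in>{0,1,2}. fst (snd (L ! i))).
      (\<Sum>i\<in>{0,1,2}. s i * ind (fst (snd (L ! i))) \<omega> * (fst (L ! i) \<omega> - snd (snd (L ! i)))) \<le> 0"
    unfolding len e .
  moreover have u: "H \<union> (K \<union> (H \<union> K)) = H \<union> K" by blast
  ultimately show ?thesis by (simp add: L_def s_def add.assoc u)
qed

lemma dual:
  assumes coh: "coherent [(ind A, H, x), (ind B, K, y), (disj_num A H B K x y, H \<union> K, w)]"
  shows "\<exists>(k::nat) u \<omega>. (\<forall>i\<in>{1..k}. 0 \<le> u i \<and> \<omega> i \<in> H \<union> K) \<and> sum u {1..k} = 1 \<and>
     (\<Sum>i\<in>{1..k}. u i * (ind H (\<omega> i) * (ind A (\<omega> i) - x))) = 0 \<and>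
     (\<Sum>i\<in>{1..k}. u i * (ind K (\<omega> i) * (ind B (\<omega> i) - y))) = 0 \<and>
     (\<Sum>i\<in>{1..k}. u i * (disj_num A H B K x y (\<omega> i) - w)) = 0"
proof -
  define v where "v \<omega> = (ind H \<omega> * (ind A \<omega> - x), ind K \<omega> * (ind B \<omega> - y), disj_num A H B K x y \<omega> - w)" for \<omega>
  let ?V = "v ` (H \<union> K)"
  let ?T = "{0::real, 1}"
  have "range v \<subseteq> (\<lambda>(h,a,k,b,d1,d2,d3). (h * (a - x), k * (b - y), d1 + x * d2 + y * d3 - w)) `
           (?T \<times> ?T \<times> ?T \<times> ?T \<times> ?T \<times> ?T \<times> ?T)"
  proof
    fix z assume "z \<in> range v"
    then obtain \<omega> where z: "z = v \<omega>" by auto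
    show "z \<in> (\<lambda>(h,a,k,b,d1,d2,d3). (h * (a - x), k * (b - y), d1 + x * d2 + y * d3 - w)) `
           (?T \<times> ?T \<times> ?T \<times> ?T \<times> ?T \<times> ?T \<times> ?T)"
    proof (rule image_eqI[where x = "(ind H \<omega>, ind A \<omega>, ind K \<omega>, ind B \<omega>, ind (A \<inter> H \<union> B \<inter> K) \<omega>,
             ind (- H \<inter> - B \<inter> K) \<omega>, ind (- K \<inter> - A \<inter> H) \<omega>)"])
      show "z = (\<lambda>(h,a,k,b,d1,d2,d3). (h * (a - x), k * (b - y), d1 + x * d2 + y * d3 - w))
         (ind H \<omega>, ind A \<omega>, ind K \<omega>, ind B \<omega>, ind (A \<inter> H \<union> B \<inter> K) \<omega>,
             ind (- H \<inter> - B \<inter> K) \<omega>, ind (- K \<inter> - A \<inter> H) \<omega>)"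
        unfolding z v_def disj_num_def by simp
      show "(ind H \<omega>, ind A \<omega>, ind K \<omega>, ind B \<omega>, ind (A \<inter> H \<union> B \<inter> K) \<omega>,
             ind (- H \<inter> - B \<inter> K) \<omega>, ind (- K \<inter> - A \<inter> H) \<omega>) \<in> ?T \<times> ?T \<times> ?T \<times> ?T \<times> ?T \<times> ?T \<times> ?T"
        by (simp add: ind_def)
    qed
  qed
  moreover have "finite (?T \<times> ?T \<times> ?T \<times> ?T \<times> ?T \<times> ?T \<times> ?T)"
    by (intro finite_cartesian_product) (rule finite.insertI, rule finite.insertI, rule finite.emptyI)+
  ultimately have "finite (range v)" by (rule finite_subset[OF _ finite_imageI])
  hence fin: "finite ?V" by (rule finite_subset[rotated]) auto
  have cl: "closed (convex hull ?V)"
    using fin by (simp add: compact_convex_hull finite_imp_compact compact_imp_closed)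
  have "0 \<in> convex hull ?V"
  proof (rule ccontr)
    assume n0: "0 \<notin> convex hull ?V"
    obtain a b where ab: "0 < b" "\<forall>z\<in>convex hull ?V. inner a z > b"
      using separating_hyperplane_closed_0[OF convex_convex_hull cl n0] by blast
    obtain a1 a2 a3 where a: "a = (a1, a2, a3)" using prod_cases3 by blast
    from coh3[OF coh, of a1 a2 a3] obtain \<omega> where om: "\<omega> \<in> H \<union> K"
      "a1 * ind H \<omega> * (ind A \<omega> - x) + a2 * ind K \<omega> * (ind B \<omega> - y)
            + a3 * ind (H \<union> K) \<omega> * (disj_num A H B K x y \<omega> - w) \<le> 0" by blast
    have "v \<omega> \<in> ?V" using om(1) by (rule imageI)
    hence "v \<omega> \<in> convex hull ?V" by (rule subsetD[OF hull_subset])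
    hence i: "inner a (v \<omega>) > b" by (rule bspec[OF ab(2)])
    have i1: "ind (H \<union> K) \<omega> = 1" using om(1) by (simp add: ind_def)
    have "inner a (v \<omega>) = a1 * ind H \<omega> * (ind A \<omega> - x) + a2 * ind K \<omega> * (ind B \<omega> - y)
            + a3 * ind (H \<union> K) \<omega> * (disj_num A H B K x y \<omega> - w)"
      unfolding a v_def i1 by (simp add: algebra_simps)
    thus False using i om(2) ab(1) by linarith
  qed
  hence "\<exists>(k::nat) u z. (\<forall>i\<in>{1..k}. 0 \<le> u i \<and> z i \<in> ?V) \<and> sum u {1..k} = 1 \<and>
      (\<Sum>i=1..k. u i *\<^sub>R z i) = 0"
    unfolding convex_hull_indexed mem_Collect_eq .
  then obtain k :: nat and u z where uz: "\<forall>i\<in>{1..k}. 0 \<le> u i \<and> z i \<in> ?V" "sum u {1..k} = 1"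
      "(\<Sum>i=1..k. u i *\<^sub>R z i) = 0" by blast
  have "\<forall>i\<in>{1..k}. \<exists>\<omega>. \<omega> \<in> H \<union> K \<and> z i = v \<omega>" using uz(1) by blast
  from bchoice[OF this] obtain \<omega> where om: "\<forall>i\<in>{1..k}. \<omega> i \<in> H \<union> K \<and> z i = v (\<omega> i)" by blast
  have "(\<Sum>i=1..k. u i *\<^sub>R v (\<omega> i)) = (\<Sum>i=1..k. u i *\<^sub>R z i)"
    by (rule sum.cong) (use om in auto)
  hence s: "(\<Sum>i=1..k. u i *\<^sub>R v (\<omega> i)) = 0" using uz(3) by simp
  have c1: "inner (1, 0, 0) (\<Sum>i=1..k. u i *\<^sub>R v (\<omega> i)) = 0"
   and c2: "inner (0, 1, 0) (\<Sum>i=1..k. u i *\<^sub>R v (\<omega> i)) = 0"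
   and c3: "inner (0, 0, 1) (\<Sum>i=1..k. u i *\<^sub>R v (\<omega> i)) = 0" using s by simp_all
  show ?thesis
    apply (rule exI[of _ k], rule exI[of _ u], rule exI[of _ \<omega>])
    using uz(1,2) om c1 c2 c3 by (simp add: inner_sum_right v_def)
qed

theorem theorem16:
  fixes A B H K :: "'w set" and x y w :: real
  assumes "H \<noteq> {}" and "K \<noteq> {}"
    and "coherent [(ind A, H, x), (ind B, K, y), (disj_num A H B K x y, H \<union> K, w)]"
  shows "\<exists>l::ereal. 0 \<le> l \<and>
           (\<forall>\<omega>. cond_disj A H B K x y w \<omega>
                = frank_S l (cond_event A H x \<omega>) (cond_event B K y \<omega>))"
proof -
  obtain k :: nat and u \<omega> where W: "\<forall>i\<in>{1..k}. 0 \<le> u i \<and> \<omega> i \<in> H \<union> K" "sum u {1..k} = 1"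
     "(\<Sum>i\<in>{1..k}. u i * (ind H (\<omega> i) * (ind A (\<omega> i) - x))) = 0"
     "(\<Sum>i\<in>{1..k}. u i * (ind K (\<omega> i) * (ind B (\<omega> i) - y))) = 0"
     "(\<Sum>i\<in>{1..k}. u i * (disj_num A H B K x y (\<omega> i) - w)) = 0"
    using dual[OF assms(3)] by blast
  have C: "w = x + y - x * y \<or> (0 \<le> x \<and> x \<le> 1 \<and> 0 \<le> y \<and> y \<le> 1 \<and> x \<le> w \<and> y \<le> w \<and> w \<le> x + y \<and> w \<le> 1)"
    by (rule dualC[OF _ W]) simp
  show ?thesis
  proof (cases "w = x + y - x * y")
    case True
    show ?thesis
      by (intro exI[of _ 1] conjI allI pointwise) (auto simp: S_one True)
  next
    case False
    hence b: "0 \<le> x" "x \<le> 1" "0 \<le> y" "y \<le> 1" "x \<le> w" "y \<le> w" "w \<le> x + y" "w \<le> 1" using C by auto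
    obtain l where l: "0 \<le> l" "frank_T l (1 - x) (1 - y) = 1 - w"
      using T_exists[of "1 - x" "1 - y" "1 - w"] b by auto
    have Sxy: "frank_S l x y = w" using l by (simp add: frank_S_def)
    show ?thesis
      by (intro exI[of _ l] conjI allI pointwise) (use l b Sxy S_bound[OF l(1)] in auto)
  qed
qed


end
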